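(* Let $D$ be a strong digraph with $D\in\mathcal{LE}_2$. Then $2\leq \overrightarrow{\chi}(D)\leq 3$.
   Context: All digraphs are finite, without loops or multiple arcs. Paths and cycles are directed; the length of a path or cycle is its number of arcs. The dichromatic number $\overrightarrow{\chi}(D)$ is the least $k$ such that $V(D)$ can be partitioned into $k$ classes each inducing an acyclic subdigraph (one with no directed cycle; a pair of opposite arcs counts as a directed cycle of length 2). A digraph is strong if for every ordered pair of vertices $x,y$ there is a directed path from $x$ to $y$. For a subdigraph $H$ of a digraph $D$, an ear of $H$ in $D$ is either a directed path in $D$ whose two end vertices lie in $H$ and whose internal vertices do not lie in $H$, or a directed cycle in $D$ having exactly one vertex in $H$. An ear decomposition of a strong digraph $D$ is a sequence $(D_0,D_1,\ldots,D_k)$ of strong subdigraphs of $D$ such that $D_0$ is a directed cycle, $D_{j+1}=D_j\cup P_j$ where $P_j$ is an ear of $D_j$ in $D$ for every $j\in\{0,\ldots,k-1\}$, and $D_k=D$. For an integer $i\geq 1$, $\mathcal{LE}_i$ denotes the family of strong digraphs having an ear decomposition in which every ear has length at least $i$. *)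

theory Defs
  imports Main
begin

definition digraph :: "'a set \<Rightarrow> ('a \<times> 'a) set \<Rightarrow> bool" where
  "digraph V A \<longleftrightarrow> finite V \<and> A \<subseteq> V \<times> V \<and> (\<forall>v. (v, v) \<notin> A)"

definition strong :: "'a set \<Rightarrow> ('a \<times> 'a) set \<Rightarrow> bool" where
  "strong V A \<longleftrightarrow> (\<forall>x\<in>V. \<forall>y\<in>V. (x, y) \<in> (A \<inter> V \<times> V)\<^sup>*)"

text \<open>A directed path is given by its list of distinct vertices; its length
(number of arcs) is length p - 1. Its arc set is path_arcs p.\<close>
definition path_arcs :: "'a list \<Rightarrow> ('a \<times> 'a) set" where
  "path_arcs p = set (zip p (tl p))"

definition is_path :: "('a \<times> 'a) set \<Rightarrow> 'a list \<Rightarrow> bool" where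
  "is_path A p \<longleftrightarrow> p \<noteq> [] \<and> distinct p \<and> path_arcs p \<subseteq> A"

text \<open>A directed cycle is given by its list of distinct vertices
[v0,...,v(k-1)], k \<ge> 2, with arcs v_i v_(i+1) and v_(k-1) v_0; its length is k.
A pair of opposite arcs is a cycle of length 2.\<close>
definition cycle_arcs :: "'a list \<Rightarrow> ('a \<times> 'a) set" where
  "cycle_arcs c = set (zip c (rotate1 c))"

definition is_cycle :: "('a \<times> 'a) set \<Rightarrow> 'a list \<Rightarrow> bool" where
  "is_cycle A c \<longleftrightarrow> length c \<ge> 2 \<and> distinct c \<and> cycle_arcs c \<subseteq> A"

definition ear_path :: "'a set \<Rightarrow> ('a \<times> 'a) set \<Rightarrow> 'a set \<Rightarrow> 'a list \<Rightarrow> bool" where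
  "ear_path V A VH p \<longleftrightarrow> is_path A p \<and> set p \<subseteq> V \<and> length p \<ge> 2 \<and>
     hd p \<in> VH \<and> last p \<in> VH \<and> (\<forall>v \<in> set (butlast (tl p)). v \<notin> VH)"

definition ear_cycle :: "'a set \<Rightarrow> ('a \<times> 'a) set \<Rightarrow> 'a set \<Rightarrow> 'a list \<Rightarrow> bool" where
  "ear_cycle V A VH c \<longleftrightarrow> is_cycle A c \<and> set c \<subseteq> V \<and> card (set c \<inter> VH) = 1"

text \<open>Subdigraphs (VH, AH) of D = (V, A) that arise as some D_j of an ear
decomposition in which every ear has length at least i. Every D_j is required
to be strong, as in the definition.\<close>
inductive long_ear_sub :: "nat \<Rightarrow> 'a set \<Rightarrow> ('a \<times> 'a) set \<Rightarrow> 'a set \<Rightarrow> ('a \<times> 'a) set \<Rightarrow> bool"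
  for i :: nat and V :: "'a set" and A :: "('a \<times> 'a) set" where
  start: "\<lbrakk> is_cycle A c; set c \<subseteq> V \<rbrakk> \<Longrightarrow> long_ear_sub i V A (set c) (cycle_arcs c)"
| add_path: "\<lbrakk> long_ear_sub i V A VH AH; ear_path V A VH p; length p - 1 \<ge> i;
               strong (VH \<union> set p) (AH \<union> path_arcs p) \<rbrakk>
             \<Longrightarrow> long_ear_sub i V A (VH \<union> set p) (AH \<union> path_arcs p)"
| add_cycle: "\<lbrakk> long_ear_sub i V A VH AH; ear_cycle V A VH c; length c \<ge> i;
               strong (VH \<union> set c) (AH \<union> cycle_arcs c) \<rbrakk>
             \<Longrightarrow> long_ear_sub i V A (VH \<union> set c) (AH \<union> cycle_arcs c)"

definition LE :: "nat \<Rightarrow> 'a set \<Rightarrow> ('a \<times> 'a) set \<Rightarrow> bool" where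
  "LE i V A \<longleftrightarrow> strong V A \<and> long_ear_sub i V A V A"

definition acyclic_set :: "('a \<times> 'a) set \<Rightarrow> 'a set \<Rightarrow> bool" where
  "acyclic_set A S \<longleftrightarrow> \<not> (\<exists>c. is_cycle A c \<and> set c \<subseteq> S)"

definition dicolourable :: "'a set \<Rightarrow> ('a \<times> 'a) set \<Rightarrow> nat \<Rightarrow> bool" where
  "dicolourable V A k \<longleftrightarrow> (\<exists>f :: 'a \<Rightarrow> nat. (\<forall>v\<in>V. f v < k) \<and>
       (\<forall>j<k. acyclic_set A {v\<in>V. f v = j}))"

definition dichromatic :: "'a set \<Rightarrow> ('a \<times> 'a) set \<Rightarrow> nat" where
  "dichromatic V A = (LEAST k. dicolourable V A k)"

end

theory Submission
  imports Defs
begin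

lemma cycle_arcs_nth: "cycle_arcs c = {(c!j, c!(Suc j mod length c)) | j. j < length c}"
  unfolding cycle_arcs_def set_zip by (auto simp: nth_rotate1)

lemma path_arcs_nth: "path_arcs p = {(p!j, p!(Suc j)) | j. Suc j < length p}"
  unfolding path_arcs_def set_zip by (force simp: nth_tl)

lemma cyc_out: "is_cycle E c \<Longrightarrow> x \<in> set c \<Longrightarrow> \<exists>y\<in>set c. (x,y) \<in> E"
proof -
  assume c: "is_cycle E c" and "x \<in> set c"
  then obtain i where i: "i < length c" "c!i = x" by (auto simp: in_set_conv_nth)
  have "(c!i, c!(Suc i mod length c)) \<in> cycle_arcs c" unfolding cycle_arcs_nth using i by auto
  moreover have "Suc i mod length c < length c" using i by (intro mod_less_divisor) auto
  then have "c!(Suc i mod length c) \<in> set c" by (rule nth_mem)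
  ultimately show ?thesis using c i unfolding is_cycle_def by auto
qed

lemma cycle_arcs_sub: "cycle_arcs c \<subseteq> set c \<times> set c"
  unfolding cycle_arcs_def by (auto dest: set_zip_leftD set_zip_rightD)

lemma path_arcs_sub: "path_arcs c \<subseteq> set c \<times> set c"
proof
  fix z assume "z \<in> path_arcs c"
  obtain a b where z0: "z = (a,b)" by (cases z)
  then have z: "z = (a,b)" "(a,b) \<in> set (zip c (tl c))" using \<open>z \<in> path_arcs c\<close> unfolding path_arcs_def by auto
  then have "a \<in> set c" "b \<in> set (tl c)" by (auto dest: set_zip_leftD set_zip_rightD)
  then show "z \<in> set c \<times> set c" using z by (cases c) auto
qed


lemma colour_sub:
  assumes f: "\<forall>j<2. acyclic_set AH {v\<in>VH. f v = j}" and j: "j < (2::nat)"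
    and c: "is_cycle E c" and arcs: "cycle_arcs c \<subseteq> AH" and sub: "set c \<subseteq> VH"
    and col: "\<forall>x\<in>set c. f x = j"
  shows False
proof -
  have "is_cycle AH c" using c arcs unfolding is_cycle_def by auto
  moreover have "set c \<subseteq> {v\<in>VH. f v = j}" using sub col by auto
  ultimately show False using f j unfolding acyclic_set_def by blast
qed

lemma path_step:
  assumes AH: "AH \<subseteq> VH \<times> VH" and fb: "\<forall>v\<in>VH. f v < (2::nat)"
    and f: "\<forall>j<2. acyclic_set AH {v\<in>VH. f v = j}"
    and ep: "ear_path V A VH p" and len: "length p \<ge> 3"
  shows "dicolourable (VH \<union> set p) (AH \<union> path_arcs p) 2"
proof -
  define n where "n = length p"
  define w where "w = last p"
  have pne: "p \<noteq> []" using len by auto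
  have dist: "distinct p" using ep unfolding ear_path_def is_path_def by auto
  have wn: "w = p!(n-1)" unfolding w_def n_def using pne by (simp add: last_conv_nth)
  have wV: "w \<in> VH" using ep unfolding ear_path_def w_def by auto
  have hV: "p!0 \<in> VH" using ep pne unfolding ear_path_def by (simp add: hd_conv_nth)
  have internal: "p!i \<notin> VH" if "0 < i" "i < n - 1" for i
  proof -
    have "butlast (tl p) ! (i-1) = p!i" using that unfolding n_def
      by (simp add: nth_butlast nth_tl)
    moreover have "i - 1 < length (butlast (tl p))" using that unfolding n_def by simp
    ultimately have "p!i \<in> set (butlast (tl p))" by (metis nth_mem)
    then show ?thesis using ep unfolding ear_path_def by auto
  qed
  have inp: "x \<in> set p \<Longrightarrow> x \<notin> VH \<Longrightarrow> \<exists>i. 0 < i \<and> i < n - 1 \<and> x = p!i" for x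
  proof -
    assume "x \<in> set p" "x \<notin> VH"
    then obtain i where i: "i < n" "x = p!i" unfolding n_def by (auto simp: in_set_conv_nth)
    have "i \<noteq> 0" using i hV \<open>x \<notin> VH\<close> by (metis)
    moreover have "i \<noteq> n - 1" using i wV wn \<open>x \<notin> VH\<close> by auto
    ultimately show ?thesis using i by auto
  qed
  have out: "y = p!(Suc i)" if H: "0 < i" "i < n - 1" "(p!i, y) \<in> AH \<union> path_arcs p" for i y
  proof -
    have "(p!i, y) \<notin> AH" using internal[OF H(1,2)] AH by auto
    then obtain j where j: "Suc j < n" "p!i = p!j" "y = p!Suc j" using H(3)
      unfolding path_arcs_nth n_def by auto
    have "i = j" using j(1,2) H dist unfolding n_def by (simp add: nth_eq_iff_index_eq)
    then show ?thesis using j by simp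
  qed
  define g where "g x = (if x \<in> VH then f x else 1 - f w)" for x
  show ?thesis unfolding dicolourable_def
  proof (intro exI[of _ g] conjI allI impI ballI)
    fix x assume "x \<in> VH \<union> set p" then show "g x < 2" using fb unfolding g_def by auto
  next
    fix j :: nat assume j: "j < 2"
    show "acyclic_set (AH \<union> path_arcs p) {v \<in> VH \<union> set p. g v = j}"
      unfolding acyclic_set_def
    proof
      assume "\<exists>c. is_cycle (AH \<union> path_arcs p) c \<and> set c \<subseteq> {v \<in> VH \<union> set p. g v = j}"
      then obtain c where c: "is_cycle (AH \<union> path_arcs p) c" and cs: "set c \<subseteq> {v \<in> VH \<union> set p. g v = j}"
        by blast
      show False
      proof (cases "\<exists>x\<in>set c. x \<notin> VH")
        case True
        then obtain x where x: "x \<in> set c" "x \<notin> VH" by blast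
        then obtain i where i: "0 < i" "i < n - 1" "x = p!i" using inp cs by blast
        have reach: "i + m \<le> n - 1 \<Longrightarrow> p!(i+m) \<in> set c" for m
        proof (induction m)
          case 0 then show ?case using x i by simp
        next
          case (Suc m)
          then have m: "p!(i+m) \<in> set c" by simp
          then obtain y where y: "y \<in> set c" "(p!(i+m), y) \<in> AH \<union> path_arcs p"
            using cyc_out[OF c] by blast
          have "y = p!(Suc (i+m))" using out[OF _ _ y(2)] i Suc.prems by simp
          then show ?case using y by simp
        qed
        have "w \<in> set c" using reach[of "n - 1 - i"] i wn by simp
        then have "f w = j" using cs wV unfolding g_def by auto
        moreover have "1 - f w = j" using cs x unfolding g_def by auto
        moreover have "f w < 2" using fb wV by auto
        ultimately show False by presburger
      next
        case False
        then have sub: "set c \<subseteq> VH" by auto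
        have "cycle_arcs c \<subseteq> AH"
        proof
          fix z assume z: "z \<in> cycle_arcs c"
          then have zc: "z \<in> AH \<union> path_arcs p" using c unfolding is_cycle_def by auto
          obtain a b where ab: "z = (a,b)" by (cases z)
          have abV: "a \<in> VH" "b \<in> VH" using cycle_arcs_sub z ab sub by auto
          show "z \<in> AH"
          proof (rule ccontr)
            assume "z \<notin> AH"
            then obtain k where k: "Suc k < n" "a = p!k" "b = p!Suc k" using zc ab
              unfolding path_arcs_nth n_def by auto
            show False
            proof (cases k)
              case 0 then show False using internal[of 1] k abV len unfolding n_def by auto
            next
              case (Suc k') then show False using internal[of k] k abV by auto
            qed
          qed
        qed
        moreover have "\<forall>x\<in>set c. f x = j" using cs sub unfolding g_def by force
        ultimately show False using colour_sub[OF f j c _ sub] by blast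
      qed
    qed
  qed
qed

lemma cycle_step:
  assumes AH: "AH \<subseteq> VH \<times> VH" and fb: "\<forall>v\<in>VH. f v < (2::nat)"
    and f: "\<forall>j<2. acyclic_set AH {v\<in>VH. f v = j}"
    and C: "is_cycle E C" and vC: "v \<in> set C" and cap: "set C \<inter> VH \<subseteq> {v}"
    and noloop: "\<forall>x. (x,x) \<notin> cycle_arcs C"
  shows "dicolourable (VH \<union> set C) (AH \<union> cycle_arcs C) 2"
proof -
  define n where "n = length C"
  have dist: "distinct C" and n2: "n \<ge> 2" using C unfolding is_cycle_def n_def by auto
  obtain k where k: "k < n" "C!k = v" using vC unfolding n_def by (auto simp: in_set_conv_nth)
  define g0 where "g0 = (if v \<in> VH then f v else 0)"
  have g0: "g0 < 2" using fb unfolding g0_def by auto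
  define g where "g x = (if x \<in> VH then f x else if x = v then 0 else 1 - g0)" for x
  have gv: "g v = g0" unfolding g_def g0_def by auto
  have out: "y = C!(Suc i mod n)" if H: "i < n" "C!i \<noteq> v" "(C!i, y) \<in> AH \<union> cycle_arcs C" for i y
  proof -
    have "C!i \<notin> VH" using H(1,2) cap unfolding n_def by (auto dest: nth_mem)
    then have "(C!i, y) \<notin> AH" using AH by auto
    then obtain j where j: "j < n" "C!i = C!j" "y = C!(Suc j mod n)" using H(3)
      unfolding cycle_arcs_nth n_def by auto
    have "i = j" using j(1,2) H dist unfolding n_def by (simp add: nth_eq_iff_index_eq)
    then show ?thesis using j by simp
  qed
  show ?thesis unfolding dicolourable_def
  proof (intro exI[of _ g] conjI allI impI ballI)
    fix x assume "x \<in> VH \<union> set C" then show "g x < 2" using fb unfolding g_def by auto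
  next
    fix j :: nat assume j: "j < 2"
    show "acyclic_set (AH \<union> cycle_arcs C) {x \<in> VH \<union> set C. g x = j}"
      unfolding acyclic_set_def
    proof
      assume "\<exists>c. is_cycle (AH \<union> cycle_arcs C) c \<and> set c \<subseteq> {x \<in> VH \<union> set C. g x = j}"
      then obtain c where c: "is_cycle (AH \<union> cycle_arcs C) c" and cs: "set c \<subseteq> {x \<in> VH \<union> set C. g x = j}"
        by blast
      show False
      proof (cases "\<exists>x\<in>set c. x \<in> set C \<and> x \<noteq> v")
        case True
        then obtain x where x: "x \<in> set c" "x \<in> set C" "x \<noteq> v" by blast
        then obtain i where i: "i < n" "x = C!i" unfolding n_def by (auto simp: in_set_conv_nth)
        have reach: "(\<forall>m'<m. C!((i+m') mod n) \<noteq> v) \<Longrightarrow> C!((i+m) mod n) \<in> set c" for m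
        proof (induction m)
          case 0 then show ?case using x i by simp
        next
          case (Suc m)
          then have m: "C!((i+m) mod n) \<in> set c" and mv: "C!((i+m) mod n) \<noteq> v" by auto
          then obtain y where y: "y \<in> set c" "(C!((i+m) mod n), y) \<in> AH \<union> cycle_arcs C"
            using cyc_out[OF c] by blast
          have "(i+m) mod n < n" using n2 by simp
          then have "y = C!(Suc ((i+m) mod n) mod n)" using out[OF _ mv y(2)] by simp
          then have "y = C!((i + Suc m) mod n)" by (simp add: mod_Suc_eq)
          then show ?case using y by simp
        qed
        define m0 where "m0 = (LEAST m. C!((i+m) mod n) = v)"
        have ex: "C!((i+(k+n-i)) mod n) = v" using k i by simp
        have m0: "C!((i+m0) mod n) = v" unfolding m0_def using ex by (rule LeastI)
        have "\<forall>m'<m0. C!((i+m') mod n) \<noteq> v" unfolding m0_def using not_less_Least by blast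
        then have "v \<in> set c" using reach m0 by metis
        then have "g v = j" using cs by auto
        moreover have "g x = j" using cs x by auto
        moreover have "x \<notin> VH" using x cap by auto
        then have "g x = 1 - g0" using x unfolding g_def by auto
        ultimately show False using gv g0 by presburger
      next
        case False
        have "cycle_arcs c \<subseteq> AH"
        proof
          fix z assume z: "z \<in> cycle_arcs c"
          then have zc: "z \<in> AH \<union> cycle_arcs C" using c unfolding is_cycle_def by auto
          obtain a b where ab: "z = (a,b)" by (cases z)
          have abc: "a \<in> set c" "b \<in> set c" using cycle_arcs_sub z ab by auto
          show "z \<in> AH"
          proof (rule ccontr)
            assume "z \<notin> AH"
            then have "z \<in> cycle_arcs C" using zc by auto
            then have "a \<in> set C" "b \<in> set C" using cycle_arcs_sub ab by auto
            then have "a = v" "b = v" using False abc by auto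
            then show False using noloop \<open>z \<in> cycle_arcs C\<close> ab by auto
          qed
        qed
        moreover have sub: "set c \<subseteq> VH"
        proof
          fix x assume "x \<in> set c"
          then obtain y where "(x,y) \<in> cycle_arcs c"
            using c unfolding is_cycle_def
            by (metis cyc_out is_cycle_def order_refl)
          then show "x \<in> VH" using \<open>cycle_arcs c \<subseteq> AH\<close> AH by auto
        qed
        moreover have "\<forall>x\<in>set c. f x = j" using cs sub unfolding g_def by force
        ultimately show False using colour_sub[OF f j c _ sub] by blast
      qed
    qed
  qed
qed

lemma inv:
  assumes "long_ear_sub 2 V A VH AH" and dg: "digraph V A"
  shows "AH \<subseteq> VH \<times> VH \<and> dicolourable VH AH 2 \<and> (\<exists>c. is_cycle A c \<and> set c \<subseteq> VH)"
  using assms(1)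
proof (induction rule: long_ear_sub.induct)
  case (start c)
  have nl: "\<forall>x. (x,x) \<notin> cycle_arcs c" using start(1) dg unfolding is_cycle_def digraph_def by auto
  have hc: "hd c \<in> set c" using start(1) unfolding is_cycle_def by (cases c) auto
  have "dicolourable ({} \<union> set c) ({} \<union> cycle_arcs c) 2"
    by (rule cycle_step[OF _ _ _ start(1) hc _ nl, where f = "\<lambda>_. 0"])
       (auto simp: acyclic_set_def is_cycle_def)
  then show ?case using start cycle_arcs_sub by auto
next
  case (add_path VH AH p)
  then obtain f where f: "\<forall>v\<in>VH. f v < (2::nat)" "\<forall>j<2. acyclic_set AH {v\<in>VH. f v = j}"
    unfolding dicolourable_def by blast
  have "dicolourable (VH \<union> set p) (AH \<union> path_arcs p) 2"
    by (rule path_step[OF _ f add_path(2)]) (use add_path in auto)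
  then show ?case using add_path path_arcs_sub[of p] by auto
next
  case (add_cycle VH AH c)
  then obtain f where f: "\<forall>v\<in>VH. f v < (2::nat)" "\<forall>j<2. acyclic_set AH {v\<in>VH. f v = j}"
    unfolding dicolourable_def by blast
  have C: "is_cycle A c" and cd: "card (set c \<inter> VH) = 1" using add_cycle(2) unfolding ear_cycle_def by auto
  obtain v where v: "set c \<inter> VH = {v}" using cd by (rule card_1_singletonE)
  have nl: "\<forall>x. (x,x) \<notin> cycle_arcs c" using C dg unfolding is_cycle_def digraph_def by auto
  have "dicolourable (VH \<union> set c) (AH \<union> cycle_arcs c) 2"
    by (rule cycle_step[OF _ f C _ _ nl, of v]) (use add_cycle v in auto)
  then show ?case using add_cycle cycle_arcs_sub[of c] by auto
qed

theorem mainTheorem15: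
  fixes V :: "'a set" and A :: "('a \<times> 'a) set"
  assumes "digraph V A" and "strong V A" and "LE 2 V A"
  shows "2 \<le> dichromatic V A \<and> dichromatic V A \<le> 3"
proof -
  have "long_ear_sub 2 V A V A" using assms(3) unfolding LE_def by auto
  from inv[OF this assms(1)] obtain c where d2: "dicolourable V A 2" and c: "is_cycle A c" "set c \<subseteq> V"
    by blast
  have le: "dichromatic V A \<le> 2" unfolding dichromatic_def using d2 by (rule Least_le)
  have dl: "dicolourable V A (dichromatic V A)" unfolding dichromatic_def using d2 by (rule LeastI)
  have "\<not> dicolourable V A k" if "k < 2" for k
  proof
    assume "dicolourable V A k"
    then obtain f where f: "\<forall>v\<in>V. f v < k" "\<forall>j<k. acyclic_set A {v\<in>V. f v = j}"
      unfolding dicolourable_def by blast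
    have "hd c \<in> set c" using c unfolding is_cycle_def by (cases c) auto
    then have "f (hd c) < k" using f c by auto
    then have k1: "k = 1" using that by simp
    have "set c \<subseteq> {v\<in>V. f v = 0}" using f c k1 by auto
    then show False using f(2) k1 c unfolding acyclic_set_def by blast
  qed
  then have "2 \<le> dichromatic V A" using dl by (metis not_le)
  then show ?thesis using le by simp
qed

end
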